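(* Let $\mathbf P=(P,\leq,{}',0,1)$ be an orthogonal lub-complete poset. Then the following conditions are equivalent: (i) $\mathbf P$ is a Boolean algebra. (ii) $\mathbf P$ satisfies $x\leq y$ if and only if $x\rightarrow_C y=1$ for all $x,y\in P$. (iii) $\mathbf P$ is an orthocomplemented poset such that there exists a binary operator $\odot_C$ such that $x\odot_C y\leq_1 z$ if and only if $x\leq_2 y\rightarrow_C z$ for all $x,y,z\in P$.
   Context: $(P,\leq,{}',0,1)$ is a bounded poset with an antitone involution ${}'$; orthogonal means $x\leq y'$ implies $x\vee y$ exists; lub-complete means for every lower bound $x$ of a finite subset $M$ there is a maximal lower bound of $M$ above $x$; orthocomplemented means $x\vee x'=1$ for all $x$. For $A\subseteq P$, $U(A)$ is the set of upper bounds, $U(x,y)=U(\{x,y\})$, $\mathrm{Min}\,A$ is the set of minimal elements of $A$. The classical implication is $x\rightarrow_C y:=\mathrm{Min}\,U(x',y)$; $x\rightarrow_C y=1$ means it equals $\{1\}$. $\odot_C$ is a map $P^2\to 2^P$. For $A,B\subseteq P$: $A\leq_1 B$ means for every $x\in A$ there is $y\in B$ with $x\leq y$; $A\leq_2 B$ means for every $y\in B$ there is $x\in A$ with $x\leq y$. *)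

theory Defs
  imports Main
begin

text \<open>The poset is the type 'a with its order; cmp is the antitone involution,
  zero and one are the bounds.\<close>

definition UB :: "'a::order set \<Rightarrow> 'a set" where
  "UB A = {u. \<forall>a\<in>A. a \<le> u}"

definition LB :: "'a::order set \<Rightarrow> 'a set" where
  "LB A = {l. \<forall>a\<in>A. l \<le> a}"

definition MinS :: "'a::order set \<Rightarrow> 'a set" where
  "MinS A = {x\<in>A. \<forall>y\<in>A. y \<le> x \<longrightarrow> y = x}"

definition MaxS :: "'a::order set \<Rightarrow> 'a set" where
  "MaxS A = {x\<in>A. \<forall>y\<in>A. x \<le> y \<longrightarrow> y = x}"

definition is_lub :: "'a::order set \<Rightarrow> 'a \<Rightarrow> bool" where
  "is_lub A s \<longleftrightarrow> s \<in> UB A \<and> (\<forall>u\<in>UB A. s \<le> u)"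

definition is_glb :: "'a::order set \<Rightarrow> 'a \<Rightarrow> bool" where
  "is_glb A s \<longleftrightarrow> s \<in> LB A \<and> (\<forall>l\<in>LB A. l \<le> s)"

definition join :: "'a::order \<Rightarrow> 'a \<Rightarrow> 'a" where
  "join x y = (THE s. is_lub {x, y} s)"

definition meet :: "'a::order \<Rightarrow> 'a \<Rightarrow> 'a" where
  "meet x y = (THE s. is_glb {x, y} s)"

definition bounded_inv_poset :: "('a::order \<Rightarrow> 'a) \<Rightarrow> 'a \<Rightarrow> 'a \<Rightarrow> bool" where
  "bounded_inv_poset cmp zero one \<longleftrightarrow>
     (\<forall>x. zero \<le> x \<and> x \<le> one) \<and>
     (\<forall>x y. x \<le> y \<longrightarrow> cmp y \<le> cmp x) \<and>
     (\<forall>x. cmp (cmp x) = x)"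

definition orthogonal :: "('a::order \<Rightarrow> 'a) \<Rightarrow> bool" where
  "orthogonal cmp \<longleftrightarrow> (\<forall>x y. x \<le> cmp y \<longrightarrow> (\<exists>s. is_lub {x, y} s))"

definition lub_complete :: "'a::order itself \<Rightarrow> bool" where
  "lub_complete (T::'a itself) \<longleftrightarrow>
     (\<forall>M::'a set. finite M \<longrightarrow> (\<forall>x\<in>LB M. \<exists>w\<in>MaxS (LB M). x \<le> w))"

definition orthocomplemented :: "('a::order \<Rightarrow> 'a) \<Rightarrow> 'a \<Rightarrow> bool" where
  "orthocomplemented cmp one \<longleftrightarrow> (\<forall>x. is_lub {x, cmp x} one)"

definition impC :: "('a::order \<Rightarrow> 'a) \<Rightarrow> 'a \<Rightarrow> 'a \<Rightarrow> 'a set" where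
  "impC cmp x y = MinS (UB {cmp x, y})"

definition le1 :: "'a::order set \<Rightarrow> 'a set \<Rightarrow> bool" where
  "le1 A B \<longleftrightarrow> (\<forall>x\<in>A. \<exists>y\<in>B. x \<le> y)"

definition le2 :: "'a::order set \<Rightarrow> 'a set \<Rightarrow> bool" where
  "le2 A B \<longleftrightarrow> (\<forall>y\<in>B. \<exists>x\<in>A. x \<le> y)"

definition boolean_algebra_poset :: "('a::order \<Rightarrow> 'a) \<Rightarrow> 'a \<Rightarrow> 'a \<Rightarrow> bool" where
  "boolean_algebra_poset cmp zero one \<longleftrightarrow>
     (\<forall>x y::'a. \<exists>s. is_lub {x, y} s) \<and>
     (\<forall>x y::'a. \<exists>s. is_glb {x, y} s) \<and>
     (\<forall>x y z::'a. join x (meet y z) = meet (join x y) (join x z)) \<and>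
     (\<forall>x. join x (cmp x) = one \<and> meet x (cmp x) = zero)"

end

theory Submission
  imports Defs
begin

lemma is_lub_unique: "is_lub A s \<Longrightarrow> is_lub A t \<Longrightarrow> (s::'a::order) = t"
  unfolding is_lub_def by (meson order_antisym)

lemma is_glb_unique: "is_glb A s \<Longrightarrow> is_glb A t \<Longrightarrow> (s::'a::order) = t"
  unfolding is_glb_def by (meson order_antisym)

lemma join_eq: "is_lub {x, y} s \<Longrightarrow> join x y = s"
  unfolding join_def by (metis is_lub_unique the_equality)

lemma meet_eq: "is_glb {x, y} s \<Longrightarrow> meet x y = s"
  unfolding meet_def by (metis is_glb_unique the_equality)

lemma join_comm: "join x y = join y x"
  unfolding join_def by (simp add: insert_commute)

lemma MinS_lub: "is_lub A s \<Longrightarrow> MinS (UB A) = {s}"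
  unfolding MinS_def is_lub_def by (auto intro: order_antisym)

lemma lubD: "is_lub {x, y} s \<Longrightarrow> x \<le> s \<and> y \<le> s \<and> (\<forall>u. x \<le> u \<longrightarrow> y \<le> u \<longrightarrow> s \<le> u)"
  unfolding is_lub_def UB_def by auto

lemma lubI: "x \<le> s \<Longrightarrow> y \<le> s \<Longrightarrow> (\<And>u. x \<le> u \<Longrightarrow> y \<le> u \<Longrightarrow> s \<le> u) \<Longrightarrow> is_lub {x, y} s"
  unfolding is_lub_def UB_def by auto

lemma glbD: "is_glb {x, y} s \<Longrightarrow> s \<le> x \<and> s \<le> y \<and> (\<forall>u. u \<le> x \<longrightarrow> u \<le> y \<longrightarrow> u \<le> s)"
  unfolding is_glb_def LB_def by auto

lemma glbI: "s \<le> x \<Longrightarrow> s \<le> y \<Longrightarrow> (\<And>u. u \<le> x \<Longrightarrow> u \<le> y \<Longrightarrow> u \<le> s) \<Longrightarrow> is_glb {x, y} s"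
  unfolding is_glb_def LB_def by auto

locale bip =
  fixes cmp :: "'a::order \<Rightarrow> 'a" and zero one :: 'a
  assumes bot: "zero \<le> x" and top: "x \<le> one"
    and anti: "x \<le> y \<Longrightarrow> cmp y \<le> cmp x" and inv: "cmp (cmp x) = x"
begin

lemma le_cmp_iff: "cmp x \<le> cmp y \<longleftrightarrow> y \<le> x"
  by (metis anti inv)

lemma le_cmp_swap: "x \<le> cmp y \<longleftrightarrow> y \<le> cmp x"
  by (metis anti inv)

lemma cmp_zero: "cmp zero = one"
  by (metis anti bot inv order_antisym top)

lemma cmp_one: "cmp one = zero"
  by (metis cmp_zero inv)

lemma dual_lc:
  fixes a b u :: 'a
  assumes lc: "lub_complete TYPE('a)" and u: "a \<le> u" "b \<le> u"
  shows "\<exists>m\<in>MinS (UB {a, b}). m \<le> u"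
proof -
  have "cmp u \<in> LB {cmp a, cmp b}" using u anti unfolding LB_def by auto
  then obtain w where w: "w \<in> MaxS (LB {cmp a, cmp b})" "cmp u \<le> w"
    using lc unfolding lub_complete_def by (meson finite.emptyI finite.insertI)
  have wl: "w \<le> cmp a" "w \<le> cmp b" using w(1) unfolding MaxS_def LB_def by auto
  have "cmp w \<in> MinS (UB {a, b})"
    unfolding MinS_def UB_def
  proof (auto)
    show "a \<le> cmp w" "b \<le> cmp w" using wl le_cmp_swap by auto
    fix y assume y: "a \<le> y" "b \<le> y" "y \<le> cmp w"
    have "cmp y \<in> LB {cmp a, cmp b}" using y anti unfolding LB_def by auto
    moreover have "w \<le> cmp y" using y(3) le_cmp_swap by auto
    ultimately have "cmp y = w" using w(1) unfolding MaxS_def by auto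
    then show "y = cmp w" using inv by metis
  qed
  moreover have "cmp w \<le> u" using w(2) le_cmp_swap inv by metis
  ultimately show ?thesis by blast
qed

definition P2 where "P2 \<longleftrightarrow> (\<forall>x y. x \<le> y \<longleftrightarrow> impC cmp x y = {one})"

definition ortho where "ortho \<longleftrightarrow> (\<forall>x. is_lub {x, cmp x} one)"

lemma orth_lb: "ortho \<Longrightarrow> c \<le> x \<Longrightarrow> c \<le> cmp x \<Longrightarrow> c = zero"
  unfolding ortho_def
  by (metis cmp_one inv le_cmp_swap lubD order_antisym top)

lemma P2_ortho: assumes "P2" "lub_complete TYPE('a)" shows "ortho"
  unfolding ortho_def
proof
  fix x
  have m: "MinS (UB {cmp x, x}) = {one}" using assms(1) unfolding P2_def impC_def by auto
  show "is_lub {x, cmp x} one"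
  proof (rule lubI)
    show "x \<le> one" "cmp x \<le> one" by (auto simp: top)
    fix u assume "x \<le> u" "cmp x \<le> u"
    then obtain m' where "m' \<in> MinS (UB {cmp x, x})" "m' \<le> u" using dual_lc assms(2) by blast
    then show "one \<le> u" using m by auto
  qed
qed

lemma P2_K: assumes "P2" "\<And>c. c \<le> x \<Longrightarrow> c \<le> cmp y \<Longrightarrow> c = zero" shows "x \<le> y"
proof -
  have "UB {cmp x, y} = {one}"
  proof (auto simp: UB_def top)
    fix w assume w: "cmp x \<le> w" "y \<le> w"
    have "cmp w \<le> x" using w(1) by (metis anti inv)
    moreover have "cmp w \<le> cmp y" using w(2) anti by auto
    ultimately have "cmp w = zero" using assms(2) by auto
    then show "w = one" by (metis cmp_zero inv)
  qed
  then have "impC cmp x y = {one}" unfolding impC_def MinS_def by auto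
  then show ?thesis using assms(1) unfolding P2_def by auto
qed

lemma P2_lub:
  fixes x y :: 'a
  assumes P: "P2" and og: "orthogonal cmp" and lc: "lub_complete TYPE('a)"
  shows "\<exists>s. is_lub {x, y} s"
proof -
  have oc: ortho using P lc P2_ortho by auto
  obtain m where m: "m \<in> MinS (UB {x, y})" using dual_lc[OF lc, of x one y] top by blast
  have mx: "x \<le> m" "y \<le> m" and mmin: "\<And>v. x \<le> v \<Longrightarrow> y \<le> v \<Longrightarrow> v \<le> m \<Longrightarrow> v = m"
    using m unfolding MinS_def UB_def by auto
  have "is_lub {x, y} m"
  proof (rule lubI[OF mx])
    fix u assume u: "x \<le> u" "y \<le> u"
    show "m \<le> u"
    proof (rule P2_K[OF P])
      fix c assume c: "c \<le> m" "c \<le> cmp u"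
      have "cmp m \<le> cmp c" using c anti by auto
      then obtain s where s: "is_lub {cmp m, c} s" using og unfolding orthogonal_def
        by (metis inv)
      have cu: "cmp u \<le> cmp x" "cmp u \<le> cmp y" using u anti by auto
      have cx: "c \<le> cmp x" "c \<le> cmp y" using c(2) cu by (meson order_trans)+
      have sl: "cmp m \<le> s" "c \<le> s" "\<And>v. cmp m \<le> v \<Longrightarrow> c \<le> v \<Longrightarrow> s \<le> v"
        using lubD[OF s] by auto
      have "cmp m \<le> cmp x" "cmp m \<le> cmp y" using mx anti by auto
      then have "s \<le> cmp x" "s \<le> cmp y" using sl(3) cx by auto
      hence xs: "x \<le> cmp s" "y \<le> cmp s" using le_cmp_swap by auto
      have "cmp s \<le> m" using sl(1) le_cmp_swap inv by metis
      hence "cmp s = m" using mmin xs by auto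
      then have "c \<le> cmp m" using sl(2) inv by metis
      then have "c \<le> cmp c" using c(1) anti[of c m] by (meson order_trans)
      then show "c = zero" using orth_lb[OF oc] by auto
    qed
  qed
  then show ?thesis by blast
qed

lemma glb_from_lub: assumes "is_lub {cmp x, cmp y} s" shows "is_glb {x, y} (cmp s)"
proof (rule glbI)
  have h: "cmp x \<le> s" "cmp y \<le> s" "\<And>u. cmp x \<le> u \<Longrightarrow> cmp y \<le> u \<Longrightarrow> s \<le> u"
    using lubD[OF assms] by auto
  show "cmp s \<le> x" "cmp s \<le> y" using h(1,2) le_cmp_swap inv by metis+
  fix u assume "u \<le> x" "u \<le> y"
  then have "cmp x \<le> cmp u" "cmp y \<le> cmp u" using anti by auto
  then have "s \<le> cmp u" using h(3) by auto
  then show "u \<le> cmp s" using le_cmp_swap by auto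
qed


definition BA where "BA \<longleftrightarrow> boolean_algebra_poset cmp zero one"

lemma BA_P2: assumes "BA" shows "P2"
proof -
  have L: "\<And>x y::'a. is_lub {x, y} (join x y)" and G: "\<And>x y::'a. is_glb {x, y} (meet x y)"
  proof -
    fix x y :: 'a
    have "Ex (is_lub {x, y})" "Ex (is_glb {x, y})"
      using assms unfolding BA_def boolean_algebra_poset_def by auto
    then obtain s t where hs: "is_lub {x, y} s" and ht: "is_glb {x, y} t" by blast
    show "is_lub {x, y} (join x y)" "is_glb {x, y} (meet x y)"
      using join_eq[OF hs] meet_eq[OF ht] hs ht by simp_all
  qed
  have D: "\<And>x y z::'a. join x (meet y z) = meet (join x y) (join x z)"
    and C: "\<And>x::'a. join x (cmp x) = one" "\<And>x::'a. meet x (cmp x) = zero"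
    using assms unfolding BA_def boolean_algebra_poset_def by auto
  show ?thesis unfolding P2_def
  proof (intro allI)
    fix x y :: 'a
    have I: "impC cmp x y = {join (cmp x) y}" unfolding impC_def using MinS_lub L by blast
    show "x \<le> y \<longleftrightarrow> impC cmp x y = {one}"
    proof
      assume "x \<le> y"
      have "cmp x \<le> join (cmp x) y" "y \<le> join (cmp x) y" using lubD[OF L[of "cmp x" y]] by auto
      then have "cmp x \<le> join (cmp x) y" "x \<le> join (cmp x) y" using \<open>x \<le> y\<close> by (auto dest: order_trans)
      then have "join x (cmp x) \<le> join (cmp x) y" using lubD[OF L[of x "cmp x"]] by auto
      then have "join (cmp x) y = one" using C(1)[of x] top[of "join (cmp x) y"] by simp
      then show "impC cmp x y = {one}" using I by simp
    next
      assume "impC cmp x y = {one}"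
      then have j: "join (cmp x) y = one" using I by simp
      have "is_lub {y, zero} y" by (rule lubI) (auto simp: bot)
      then have "join y zero = y" by (rule join_eq)
      then have "y = join y (meet x (cmp x))" using C(2) by simp
      also have "\<dots> = meet (join y x) (join y (cmp x))" using D by simp
      also have "\<dots> = meet (join y x) one" using j join_comm by metis
      also have "\<dots> = join y x"
        by (rule meet_eq, rule glbI) (auto simp: top)
      finally have "y = join y x" .
      then show "x \<le> y" using lubD[OF L[of y x]] by metis
    qed
  qed
qed

lemma P2_BA:
  assumes P: "P2" and og: "orthogonal cmp" and lc: "lub_complete TYPE('a)"
  shows "BA"
proof -
  have oc: ortho using P lc P2_ortho by auto
  have L: "\<And>x y::'a. is_lub {x, y} (join x y)"
    using P2_lub[OF P og lc] join_eq by metis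
  have G: "\<And>x y::'a. is_glb {x, y} (meet x y)"
  proof -
    fix x y :: 'a
    show "is_glb {x, y} (meet x y)" using glb_from_lub[OF L[of "cmp x" "cmp y"]] meet_eq by metis
  qed
  have D: "join x (meet y z) = meet (join x y) (join x z)" for x y z :: 'a
  proof -
    let ?a = "meet (join x y) (join x z)" and ?b = "join x (meet y z)"
    have jx: "x \<le> join x y" "y \<le> join x y" "x \<le> join x z" "z \<le> join x z"
      using lubD[OF L] by auto
    have my: "meet y z \<le> y" "meet y z \<le> z" using glbD[OF G] by auto
    have ab: "x \<le> ?a" "meet y z \<le> ?a" using glbD[OF G] jx my by (meson order_trans)+
    have ba: "?b \<le> ?a" using lubD[OF L] ab by auto
    have "?a \<le> ?b"
    proof (rule P2_K[OF P])
      fix c assume c: "c \<le> ?a" "c \<le> cmp ?b"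
      have bc: "?b \<le> cmp c" using c(2) le_cmp_swap by auto
      have "x \<le> cmp c" "meet y z \<le> cmp c" using lubD[OF L] bc by (meson order_trans)+
      then have cx: "c \<le> cmp x" and cm: "c \<le> cmp (meet y z)" using le_cmp_swap by auto
      have ca: "c \<le> join x y" "c \<le> join x z" using c(1) glbD[OF G] by (meson order_trans)+
      have cy: "c \<le> w" if w: "w = y \<or> w = z" for w
      proof (rule P2_K[OF P])
        fix d assume d: "d \<le> c" "d \<le> cmp w"
        have "d \<le> cmp x" using d(1) cx order_trans by blast
        then have "x \<le> cmp d" "w \<le> cmp d" using d(2) le_cmp_swap by auto
        then have "join x w \<le> cmp d" using lubD[OF L] by auto
        then have "d \<le> cmp (join x w)" using le_cmp_swap by auto
        moreover have "d \<le> join x w" using d(1) ca w by (meson order_trans)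
        ultimately show "d = zero" using orth_lb[OF oc] by auto
      qed
      have "c \<le> meet y z" using glbD[OF G] cy by auto
      then show "c = zero" using orth_lb[OF oc] cm by auto
    qed
    then show ?thesis using ba by auto
  qed
  have C1: "join x (cmp x) = one" for x :: 'a using oc join_eq unfolding ortho_def by auto
  have C2: "meet x (cmp x) = zero" for x :: 'a
  proof (rule meet_eq, rule glbI)
    fix u assume "u \<le> x" "u \<le> cmp x" then show "u \<le> zero" using orth_lb[OF oc] by auto
  qed (auto simp: bot)
  show ?thesis unfolding BA_def boolean_algebra_poset_def
    using L G D C1 C2 by blast
qed

definition P3 where "P3 \<longleftrightarrow> ortho \<and> (\<exists>odot :: 'a \<Rightarrow> 'a \<Rightarrow> 'a set. \<forall>x y z.
                  le1 (odot x y) {z} \<longleftrightarrow> le2 {x} (impC cmp y z))"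

lemma P2_P3:
  assumes P: "P2" and og: "orthogonal cmp" and lc: "lub_complete TYPE('a)"
  shows "P3"
proof -
  have oc: ortho using P lc P2_ortho by auto
  have L: "\<And>x y::'a. is_lub {x, y} (join x y)"
    using P2_lub[OF P og lc] join_eq by metis
  have G: "\<And>x y::'a. is_glb {x, y} (meet x y)"
  proof -
    fix x y :: 'a
    show "is_glb {x, y} (meet x y)" using glb_from_lub[OF L[of "cmp x" "cmp y"]] meet_eq by metis
  qed
  have R: "meet x y \<le> z \<longleftrightarrow> x \<le> join (cmp y) z" for x y z :: 'a
  proof
    assume h: "meet x y \<le> z"
    show "x \<le> join (cmp y) z"
    proof (rule P2_K[OF P])
      fix c assume c: "c \<le> x" "c \<le> cmp (join (cmp y) z)"
      have j1: "cmp y \<le> join (cmp y) z" and j2: "z \<le> join (cmp y) z" using lubD[OF L] by auto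
      have "cmp (join (cmp y) z) \<le> y" using anti[OF j1] inv[of y] by simp
      moreover have "cmp (join (cmp y) z) \<le> cmp z" using anti[OF j2] .
      ultimately have "cmp (join (cmp y) z) \<le> y" "cmp (join (cmp y) z) \<le> cmp z" by auto
      then have cy: "c \<le> y" "c \<le> cmp z" using c(2) order_trans by blast+
      then have "c \<le> meet x y" using glbD[OF G] c(1) by auto
      then have "c \<le> z" using h order_trans by blast
      then show "c = zero" using orth_lb[OF oc] cy by auto
    qed
  next
    assume h: "x \<le> join (cmp y) z"
    show "meet x y \<le> z"
    proof (rule P2_K[OF P])
      fix c assume c: "c \<le> meet x y" "c \<le> cmp z"
      have cxy: "c \<le> x" "c \<le> y" using c(1) glbD[OF G] order_trans by blast+
      have "cmp y \<le> cmp c" "z \<le> cmp c" using cxy(2) c(2) anti le_cmp_swap by auto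
      then have "join (cmp y) z \<le> cmp c" using lubD[OF L] by auto
      then have "c \<le> cmp c" using cxy(1) h order_trans by blast
      then show "c = zero" using orth_lb[OF oc] by auto
    qed
  qed
  have I: "impC cmp y z = {join (cmp y) z}" for y z :: 'a unfolding impC_def using MinS_lub L by blast
  have W: "\<forall>x y z. le1 {meet x y} {z} \<longleftrightarrow> le2 {x} (impC cmp y z)"
    unfolding le1_def le2_def I using R by auto
  have "\<exists>odot :: 'a \<Rightarrow> 'a \<Rightarrow> 'a set. \<forall>x y z. le1 (odot x y) {z} \<longleftrightarrow> le2 {x} (impC cmp y z)"
    by (rule exI[where x="\<lambda>x y. {meet x y}"]) (simp add: W)
  then show ?thesis unfolding P3_def using oc by (intro conjI)
qed

lemma P3_P2:
  assumes "P3" shows "P2"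
proof -
  obtain odot :: "'a \<Rightarrow> 'a \<Rightarrow> 'a set" where od: "\<And>x y z.
                  le1 (odot x y) {z} \<longleftrightarrow> le2 {x} (impC cmp y z)" and oc: ortho
    using assms unfolding P3_def by blast
  show ?thesis unfolding P2_def
  proof (intro allI iffI)
    fix x y :: 'a assume xy: "x \<le> y"
    have "UB {cmp x, y} = {one}"
    proof (auto simp: UB_def top)
      fix u assume "cmp x \<le> u" "y \<le> u"
      then have "x \<le> u" "cmp x \<le> u" using xy order_trans by blast+
      then have "one \<le> u" using oc lubD unfolding ortho_def by blast
      then show "u = one" using top[of u] by simp
    qed
    then show "impC cmp x y = {one}" unfolding impC_def MinS_def by auto
  next
    fix y z :: 'a assume h: "impC cmp y z = {one}"
    let ?A = "odot y (cmp z)"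
    have "le2 {y} (impC cmp (cmp z) y)" unfolding le2_def impC_def MinS_def UB_def by auto
    then have a1: "le1 ?A {y}" using od by blast
    have "impC cmp (cmp z) (cmp y) = impC cmp y z" unfolding impC_def by (simp add: inv insert_commute)
    then have "le2 {y} (impC cmp (cmp z) (cmp y))" using h top unfolding le2_def by auto
    then have a2: "le1 ?A {cmp y}" using od by blast
    have "le1 ?A {zero}" using a1 a2 orth_lb[OF oc] unfolding le1_def by auto
    then have "le2 {y} (impC cmp (cmp z) zero)" using od by blast
    moreover have "z \<in> impC cmp (cmp z) zero" unfolding impC_def MinS_def UB_def
      by (auto simp: inv bot)
    ultimately show "y \<le> z" unfolding le2_def by auto
  qed
qed

end

theorem theorem3:
  fixes cmp :: "'a::order \<Rightarrow> 'a" and zero one :: 'a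
  assumes "bounded_inv_poset cmp zero one"
    and "orthogonal cmp"
    and "lub_complete TYPE('a)"
  shows "(boolean_algebra_poset cmp zero one
          \<longleftrightarrow> (\<forall>x y. x \<le> y \<longleftrightarrow> impC cmp x y = {one}))
       \<and> ((\<forall>x y. x \<le> y \<longleftrightarrow> impC cmp x y = {one})
          \<longleftrightarrow> (orthocomplemented cmp one \<and>
               (\<exists>odot :: 'a \<Rightarrow> 'a \<Rightarrow> 'a set. \<forall>x y z.
                  le1 (odot x y) {z} \<longleftrightarrow> le2 {x} (impC cmp y z))))"
proof -
  interpret bip cmp zero one
    using assms(1) unfolding bounded_inv_poset_def by unfold_locales auto
  have e1: "BA = boolean_algebra_poset cmp zero one" unfolding BA_def ..
  have e2: "P2 = (\<forall>x y. x \<le> y \<longleftrightarrow> impC cmp x y = {one})" unfolding P2_def ..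
  have e3: "P3 = (orthocomplemented cmp one \<and>
               (\<exists>odot :: 'a \<Rightarrow> 'a \<Rightarrow> 'a set. \<forall>x y z.
                  le1 (odot x y) {z} \<longleftrightarrow> le2 {x} (impC cmp y z)))"
    unfolding P3_def ortho_def orthocomplemented_def ..
  have "BA \<longleftrightarrow> P2" using BA_P2 P2_BA assms by blast
  moreover have "P2 \<longleftrightarrow> P3" using P2_P3 P3_P2 assms by blast
  ultimately show ?thesis using e1 e2 e3 by simp
qed

end
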